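(* Let $T$ be a tree of order $n$ with exactly $n_2$ vertices of degree $2$. Then $$b(T)\le \left\lceil \left(n+n_2-\left\lceil\sqrt{n+n_2+0.25}-1.5\right\rceil\right)^{1/2}\right\rceil.$$
   Context: All graphs are finite and simple. Burning process of a connected graph $G$: initially all vertices are unburned. In each round $r\ge 1$, one vertex $x_r$ that is unburned at the end of round $r-1$ is chosen as the source of round $r$; in round $r$ the source $x_r$ becomes burned, and so does every vertex that was unburned at the end of round $r-1$ and is adjacent to a vertex burned at the end of round $r-1$. Burned vertices stay burned. If all vertices are burned at the end of round $k$ (and not earlier), $(x_1,\dots,x_k)$ is called a burning sequence for $G$ of length $k$. The burning number $b(G)$ is the minimum length of a burning sequence for $G$. *)

theory Defs
  imports Complex_Main
begin

definition simple_graph :: "'a set \<Rightarrow> ('a \<Rightarrow> 'a \<Rightarrow> bool) \<Rightarrow> bool" where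
  "simple_graph V E \<longleftrightarrow> finite V \<and> (\<forall>u v. E u v \<longrightarrow> u \<in> V \<and> v \<in> V)
     \<and> (\<forall>u v. E u v \<longrightarrow> E v u) \<and> (\<forall>v. \<not> E v v)"

definition connected_graph :: "'a set \<Rightarrow> ('a \<Rightarrow> 'a \<Rightarrow> bool) \<Rightarrow> bool" where
  "connected_graph V E \<longleftrightarrow> V \<noteq> {} \<and> (\<forall>u\<in>V. \<forall>v\<in>V. E\<^sup>*\<^sup>* u v)"

definition is_cycle :: "('a \<Rightarrow> 'a \<Rightarrow> bool) \<Rightarrow> 'a list \<Rightarrow> bool" where
  "is_cycle E cs \<longleftrightarrow> length cs \<ge> 3 \<and> distinct cs
     \<and> (\<forall>i. Suc i < length cs \<longrightarrow> E (cs ! i) (cs ! Suc i)) \<and> E (last cs) (hd cs)"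

definition tree :: "'a set \<Rightarrow> ('a \<Rightarrow> 'a \<Rightarrow> bool) \<Rightarrow> bool" where
  "tree V E \<longleftrightarrow> simple_graph V E \<and> connected_graph V E \<and> \<not> (\<exists>cs. is_cycle E cs)"

definition degree :: "'a set \<Rightarrow> ('a \<Rightarrow> 'a \<Rightarrow> bool) \<Rightarrow> 'a \<Rightarrow> nat" where
  "degree V E v = card {u \<in> V. E v u}"

fun burned :: "('a \<Rightarrow> 'a \<Rightarrow> bool) \<Rightarrow> 'a list \<Rightarrow> nat \<Rightarrow> 'a set" where
  "burned E xs 0 = {}"
| "burned E xs (Suc r) = burned E xs r \<union> {xs ! r} \<union> {v. \<exists>u \<in> burned E xs r. E u v}"

definition burning_sequence :: "'a set \<Rightarrow> ('a \<Rightarrow> 'a \<Rightarrow> bool) \<Rightarrow> 'a list \<Rightarrow> bool" where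
  "burning_sequence V E xs \<longleftrightarrow>
     (\<forall>r < length xs. xs ! r \<in> V \<and> xs ! r \<notin> burned E xs r)
     \<and> burned E xs (length xs) = V
     \<and> (\<forall>r < length xs. burned E xs r \<noteq> V)"

definition burning_number :: "'a set \<Rightarrow> ('a \<Rightarrow> 'a \<Rightarrow> bool) \<Rightarrow> nat" where
  "burning_number V E = (LEAST k. \<exists>xs. burning_sequence V E xs \<and> length xs = k)"

end

theory Submission
  imports Defs "HOL-Library.Transitive_Closure_Table"
begin

lemma rtrancl_path_nth:
  "rtrancl_path r x xs y \<Longrightarrow>
     (\<forall>i. Suc i < length (x#xs) \<longrightarrow> r ((x#xs)!i) ((x#xs)!Suc i)) \<and> last (x#xs) = y"
proof (induction rule: rtrancl_path.induct)
  case (base x)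
  then show ?case by simp
next
  case (step x y ys z)
  show ?case
  proof (intro conjI allI impI)
    fix i assume "Suc i < length (x # y # ys)"
    then show "r ((x # y # ys) ! i) ((x # y # ys) ! Suc i)"
      using step by (cases i) auto
  next
    show "last (x # y # ys) = z" using step by simp
  qed
qed

lemma rtrancl_path_set:
  "rtrancl_path r x xs y \<Longrightarrow> z \<in> set xs \<Longrightarrow> \<exists>w. r w z"
  by (induction rule: rtrancl_path.induct) auto

lemma rtranclp_sym:
  assumes "\<And>a b. r a b \<Longrightarrow> r b a" and "r\<^sup>*\<^sup>* x y"
  shows "r\<^sup>*\<^sup>* y x"
  using assms(2)
proof (induction rule: rtranclp_induct)
  case base then show ?case by simp
next
  case (step y z)
  then show ?case using assms(1) by (meson converse_rtranclp_into_rtranclp)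
qed

locale tr =
  fixes V :: "'a set" and E :: "'a \<Rightarrow> 'a \<Rightarrow> bool"
  assumes tree: "tree V E"
begin

lemma finV: "finite V" using tree unfolding tree_def simple_graph_def by auto
lemma edgeV: "E u v \<Longrightarrow> u \<in> V \<and> v \<in> V" using tree unfolding tree_def simple_graph_def by auto
lemma esym: "E u v \<Longrightarrow> E v u" using tree unfolding tree_def simple_graph_def by auto
lemma irr: "\<not> E v v" using tree unfolding tree_def simple_graph_def by auto
lemma conn: "u \<in> V \<Longrightarrow> v \<in> V \<Longrightarrow> E\<^sup>*\<^sup>* u v" using tree unfolding tree_def connected_graph_def by auto
lemma Vne: "V \<noteq> {}" using tree unfolding tree_def connected_graph_def by auto
lemma nocyc: "\<not> is_cycle E cs" using tree unfolding tree_def by auto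

definition dist :: "'a \<Rightarrow> 'a \<Rightarrow> nat" where
  "dist u v = (LEAST n. (E ^^ n) u v)"

lemma pow_sym: "(E ^^ n) u v \<Longrightarrow> (E ^^ n) v u"
proof (induction n arbitrary: v)
  case 0 then show ?case by simp
next
  case (Suc n)
  from Suc.prems obtain y where "(E ^^ n) u y" "E y v" by (auto elim: relpowp_Suc_E)
  then show ?case using Suc.IH esym by (meson relpowp_Suc_I2)
qed

lemma pow_V: "(E ^^ n) u v \<Longrightarrow> 0 < n \<Longrightarrow> u \<in> V \<and> v \<in> V"
proof (induction n arbitrary: v)
  case 0 then show ?case by simp
next
  case (Suc n)
  from Suc.prems obtain y where "(E ^^ n) u y" "E y v" by (auto elim: relpowp_Suc_E)
  then show ?case using Suc.IH edgeV by (cases n) auto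
qed

lemma dist_ex: "u \<in> V \<Longrightarrow> v \<in> V \<Longrightarrow> (E ^^ dist u v) u v"
  unfolding dist_def using conn rtranclp_imp_relpowp by (metis LeastI_ex)

lemma dist_le: "(E ^^ n) u v \<Longrightarrow> dist u v \<le> n"
  unfolding dist_def by (rule Least_le)

lemma dist_sym: "dist u v = dist v u"
  unfolding dist_def using pow_sym by metis

lemma dist_self[simp]: "dist u u = 0"
  using dist_le[of 0 u u] by simp

lemma dist_0: "u \<in> V \<Longrightarrow> v \<in> V \<Longrightarrow> dist u v = 0 \<Longrightarrow> u = v"
  using dist_ex[of u v] by simp

lemma dist_0_iff: "u \<in> V \<Longrightarrow> v \<in> V \<Longrightarrow> dist u v = 0 \<longleftrightarrow> u = v"
  using dist_0 by auto

lemma tri: "u \<in> V \<Longrightarrow> v \<in> V \<Longrightarrow> w \<in> V \<Longrightarrow> dist u w \<le> dist u v + dist v w"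
  using dist_ex[of u v] dist_ex[of v w] relpowp_trans dist_le by metis

lemma adj1: "E u v \<Longrightarrow> dist u v \<le> 1"
proof -
  assume "E u v"
  then have "(E ^^ 1) u v" by (simp only: relpowp_1)
  then show ?thesis by (rule dist_le)
qed

lemma adj_dist: "E u v \<Longrightarrow> dist u v = 1"
  using adj1[of u v] dist_0[of u v] edgeV irr by (cases "dist u v") auto

lemma adj_diff: "E u v \<Longrightarrow> w \<in> V \<Longrightarrow> dist w v \<le> dist w u + 1 \<and> dist w u \<le> dist w v + 1"
  using tri[of w u v] tri[of w v u] adj1[of u v] adj1[of v u] edgeV esym by fastforce

lemma split_dist:
  assumes "u \<in> V" "v \<in> V" "s \<le> dist u v"
  shows "\<exists>y\<in>V. dist u y = s \<and> dist y v = dist u v - s"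
proof -
  let ?D = "dist u v"
  have "(E ^^ (s + (?D - s))) u v" using dist_ex[OF assms(1,2)] assms(3) by simp
  then obtain y where y1: "(E ^^ s) u y" and y2: "(E ^^ (?D - s)) y v"
    by (auto simp: relpowp_add)
  have yV: "y \<in> V"
  proof (cases s)
    case 0 then show ?thesis using y1 assms(1) by simp
  next
    case (Suc m) then show ?thesis using y1 pow_V by blast
  qed
  have a: "dist u y \<le> s" using dist_le[OF y1] .
  have b: "dist y v \<le> ?D - s" using dist_le[OF y2] .
  have c: "?D \<le> dist u y + dist y v" using tri[OF assms(1) yV assms(2)] .
  show ?thesis using a b c assms(3) yV by (intro bexI[of _ y]) auto
qed

lemma step_dist:
  assumes "u \<in> V" "v \<in> V" "0 < dist u v"
  shows "\<exists>y. E u y \<and> dist y v = dist u v - 1"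
proof -
  obtain y where yV: "y \<in> V" and y: "dist u y = 1" "dist y v = dist u v - 1"
    using split_dist[OF assms(1,2), of 1] assms(3) by auto
  have "(E ^^ 1) u y" using dist_ex[OF assms(1) yV] y(1) by simp
  then show ?thesis using y(2) by auto
qed

definition Eo :: "'a \<Rightarrow> 'a \<Rightarrow> 'a \<Rightarrow> bool" where
  "Eo u a b \<longleftrightarrow> E a b \<and> a \<noteq> u \<and> b \<noteq> u"

lemma no_bypass:
  assumes ua: "E u a" and ub: "E u b" and ab: "a \<noteq> b"
  shows "\<not> (Eo u)\<^sup>*\<^sup>* a b"
proof
  assume "(Eo u)\<^sup>*\<^sup>* a b"
  then obtain xs where "rtrancl_path (Eo u) a xs b" using rtranclp_eq_rtrancl_path by metis
  then obtain xs' where p: "rtrancl_path (Eo u) a xs' b" and d: "distinct (a # xs')"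
    using rtrancl_path_distinct by metis
  have nu: "u \<notin> set (a # xs')"
  proof
    assume "u \<in> set (a # xs')"
    then consider "u = a" | "u \<in> set xs'" by auto
    then show False
    proof cases
      case 1 then show False using ua irr by simp
    next
      case 2 then show False using rtrancl_path_set[OF p 2] by (auto simp: Eo_def)
    qed
  qed
  have pn: "\<forall>i. Suc i < length (a#xs') \<longrightarrow> Eo u ((a#xs')!i) ((a#xs')!Suc i)"
    and pl: "last (a#xs') = b" using rtrancl_path_nth[OF p] by auto
  have "xs' \<noteq> []" using pl ab by auto
  define cs where "cs = u # a # xs'"
  have "is_cycle E cs"
    unfolding is_cycle_def
  proof (intro conjI allI impI)
    show "3 \<le> length cs" using \<open>xs' \<noteq> []\<close> unfolding cs_def by (cases xs') auto
    show "distinct cs" using d nu unfolding cs_def by simp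
    fix i assume i: "Suc i < length cs"
    show "E (cs ! i) (cs ! Suc i)"
    proof (cases i)
      case 0 then show ?thesis using ua unfolding cs_def by simp
    next
      case (Suc j)
      then have "Suc j < length (a#xs')" using i unfolding cs_def by simp
      then have "Eo u ((a#xs')!j) ((a#xs')!Suc j)" using pn by simp
      then show ?thesis using Suc unfolding cs_def Eo_def by simp
    qed
  next
    show "E (last cs) (hd cs)" using pl ub esym \<open>xs' \<noteq> []\<close> unfolding cs_def by simp
  qed
  then show False using nocyc by simp
qed

lemma closer_walk:
  assumes "u \<in> V" "v \<in> V"
  shows "a \<in> V \<Longrightarrow> dist a v < dist u v \<Longrightarrow> (Eo u)\<^sup>*\<^sup>* a v"
proof (induction "dist a v" arbitrary: a)
  case 0
  then have "a = v" using dist_0 assms by simp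
  then show ?case by simp
next
  case (Suc m)
  obtain y where y: "E a y" "dist y v = dist a v - 1" using step_dist[OF Suc.prems(1) assms(2)] Suc.hyps by auto
  have yV: "y \<in> V" using y edgeV by auto
  have "a \<noteq> u" using Suc.prems by auto
  moreover have "y \<noteq> u" using y Suc by auto
  ultimately have "Eo u a y" using y unfolding Eo_def by simp
  moreover have "(Eo u)\<^sup>*\<^sup>* y v" using Suc.hyps(1)[of y] y Suc yV by simp
  ultimately show ?case by simp
qed

lemma Eo_sym: "Eo u a b \<Longrightarrow> Eo u b a" unfolding Eo_def using esym by auto

lemma Eo_rsym: "(Eo u)\<^sup>*\<^sup>* a b \<Longrightarrow> (Eo u)\<^sup>*\<^sup>* b a"
  using rtranclp_sym[of "Eo u"] Eo_sym by blast

lemma uniq_closer: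
  assumes uV: "u \<in> V" and vV: "v \<in> V" and ua: "E u a" and ub: "E u b"
    and da: "dist a v < dist u v" and db: "dist b v < dist u v"
  shows "a = b"
proof (rule ccontr)
  assume ab: "a \<noteq> b"
  have aV: "a \<in> V" and bV: "b \<in> V" using ua ub edgeV by auto
  have "(Eo u)\<^sup>*\<^sup>* a v" using closer_walk[OF uV vV aV da] .
  moreover have "(Eo u)\<^sup>*\<^sup>* v b" using Eo_rsym[OF closer_walk[OF uV vV bV db]] .
  ultimately have "(Eo u)\<^sup>*\<^sup>* a b" by simp
  then show False using no_bypass[OF ua ub ab] by simp
qed

lemma adj_neq:
  assumes ab: "E a b" and vV: "v \<in> V"
  shows "dist a v \<noteq> dist b v"
proof
  assume eq: "dist a v = dist b v"
  have aV: "a \<in> V" and bV: "b \<in> V" using ab edgeV by auto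
  show False
  proof (cases "dist a v")
    case 0
    then have "a = v" "b = v" using dist_0 aV bV vV eq by auto
    then show False using ab irr by simp
  next
    case (Suc m)
    obtain a' where a': "E a a'" "dist a' v = m" using step_dist[OF aV vV] Suc by auto
    obtain b' where b': "E b b'" "dist b' v = m" using step_dist[OF bV vV] Suc eq by auto
    have a'V: "a' \<in> V" and b'V: "b' \<in> V" using a' b' edgeV by auto
    have w1: "(Eo a)\<^sup>*\<^sup>* a' v" using closer_walk[OF aV vV a'V] a' Suc by simp
    have w2: "(Eo a)\<^sup>*\<^sup>* b' v" using closer_walk[OF aV vV b'V] b' Suc by simp
    have "b' \<noteq> a" using b' Suc by auto
    moreover have "b \<noteq> a" using ab irr by auto
    ultimately have "Eo a b b'" using b' unfolding Eo_def by simp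
    then have "(Eo a)\<^sup>*\<^sup>* b v" using w2 by simp
    then have "(Eo a)\<^sup>*\<^sup>* v b" using Eo_rsym by blast
    then have "(Eo a)\<^sup>*\<^sup>* a' b" using w1 by simp
    moreover have "a' \<noteq> b" using a' eq Suc by auto
    ultimately show False using no_bypass[OF a'(1) ab] by simp
  qed
qed

lemma adj_pm:
  assumes "E a b" "v \<in> V"
  shows "dist b v = dist a v + 1 \<or> dist a v = dist b v + 1"
proof -
  have "dist v b \<le> dist v a + 1 \<and> dist v a \<le> dist v b + 1" using adj_diff[OF assms] .
  moreover have "dist a v \<noteq> dist b v" using adj_neq[OF assms] .
  ultimately show ?thesis using dist_sym[of v a] dist_sym[of v b] by auto
qed

end


context tr
begin

lemma cut_lemma:
  assumes pp: "E p p'" and sV: "s \<in> V" and ps: "dist p s < dist p' s"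
  shows "q \<in> V \<Longrightarrow> dist p' q < dist p q \<Longrightarrow> dist s q = dist s p' + dist p' q"
proof (induction "dist p' q" arbitrary: q)
  case 0
  have p'V: "p' \<in> V" using pp edgeV by auto
  then have "q = p'" using 0 dist_0 by metis
  then show ?case by simp
next
  case (Suc m)
  have pV: "p \<in> V" and p'V: "p' \<in> V" using pp edgeV by auto
  have qp: "0 < dist q p'" using Suc.hyps(2) dist_sym by simp
  obtain q' where q': "E q q'" "dist q' p' = dist q p' - 1" using step_dist[OF Suc.prems(1) p'V qp] by auto
  have q'V: "q' \<in> V" using q' edgeV by auto
  have m: "dist p' q' = m" using q'(2) Suc.hyps(2) dist_sym[of q p'] dist_sym[of q' p'] by simp
  have "dist p q = dist p' q + 1"
    using adj_pm[OF pp Suc.prems(1)] Suc.prems(2) by auto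
  moreover have "dist q' p = dist q p + 1 \<or> dist q p = dist q' p + 1" using adj_pm[OF q'(1) pV] .
  ultimately have "dist p' q' < dist p q'" using m Suc.hyps(2) dist_sym[of q p] dist_sym[of q' p] by auto
  then have IH: "dist s q' = dist s p' + m" using Suc.hyps(1)[OF m[symmetric] q'V] m by simp
  have "dist s q = dist s q' + 1"
  proof -
    have c: "dist q s = dist q' s + 1 \<or> dist q' s = dist q s + 1" using adj_pm[OF q'(1) sV] by auto
    have False if bad: "dist q' s = dist q s + 1"
    proof (cases m)
      case 0
      then have "q' = p'" using m dist_0 q'V p'V by auto
      then have "E p' q" using q'(1) esym by simp
      moreover have "E p' p" using pp esym by simp
      moreover have "dist q s < dist p' s" using bad \<open>q' = p'\<close> by simp
      ultimately have "q = p" using uniq_closer[OF p'V sV] ps by blast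
      then show False using Suc.prems(2) by simp
    next
      case (Suc m')
      have "0 < dist q' p'" using m Suc dist_sym by simp
      then obtain q'' where q'': "E q' q''" "dist q'' p' = dist q' p' - 1" using step_dist[OF q'V p'V] by auto
      have q''V: "q'' \<in> V" using q'' edgeV by auto
      have "dist s q'' \<le> dist s p' + dist p' q''" using tri[OF sV p'V q''V] .
      also have "dist p' q'' = m'" using q''(2) m Suc dist_sym[of q'' p'] dist_sym[of q' p'] by simp
      finally have "dist q'' s < dist q' s" using IH Suc dist_sym by simp
      moreover have "E q' q" using q'(1) esym by simp
      moreover have "dist q s < dist q' s" using bad by simp
      ultimately have "q = q''" using uniq_closer[OF q'V sV] q''(1) by blast
      then show False using q''(2) Suc.hyps(2) m Suc dist_sym[of q p'] dist_sym[of q' p'] by simp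
    qed
    then show ?thesis using c dist_sym by auto
  qed
  then show ?case using IH Suc.hyps(2) by simp
qed

lemma four_point:
  assumes qV: "q \<in> V" and sV: "s \<in> V" and tV: "t \<in> V"
  shows "p \<in> V \<Longrightarrow> dist p q + dist s t \<le> max (dist p s + dist q t) (dist p t + dist q s)"
proof (induction "dist p q" arbitrary: p)
  case 0
  then have "p = q" using dist_0 qV by auto
  then show ?case using tri[OF sV qV tV] dist_sym by auto
next
  case (Suc m)
  obtain p' where p': "E p p'" "dist p' q = dist p q - 1" using step_dist[OF Suc.prems qV] Suc.hyps by auto
  have p'V: "p' \<in> V" using p' edgeV by auto
  have IH: "dist p' q + dist s t \<le> max (dist p' s + dist q t) (dist p' t + dist q s)"
    using Suc.hyps(1)[of p'] p' Suc.hyps(2) p'V by simp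
  have cs: "dist p' s = dist p s + 1 \<or> dist p s = dist p' s + 1" using adj_pm[OF p'(1) sV] .
  have ct: "dist p' t = dist p t + 1 \<or> dist p t = dist p' t + 1" using adj_pm[OF p'(1) tV] .
  show ?case
  proof (cases "dist p s < dist p' s")
    case True
    have "dist s q = dist s p' + dist p' q" using cut_lemma[OF p'(1) sV True qV] p' Suc.hyps by simp
    then have "dist q s = dist p s + dist p q" using cs True p' Suc.hyps dist_sym[of s q] dist_sym[of s p'] by simp
    moreover have "dist s t \<le> dist s p + dist p t" using tri[OF sV Suc.prems tV] .
    ultimately show ?thesis using dist_sym[of s p] by simp
  next
    case F1: False
    show ?thesis
    proof (cases "dist p t < dist p' t")
      case True
      have "dist t q = dist t p' + dist p' q" using cut_lemma[OF p'(1) tV True qV] p' Suc.hyps by simp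
      then have "dist q t = dist p t + dist p q" using ct True p' Suc.hyps dist_sym[of t q] dist_sym[of t p'] by simp
      moreover have "dist s t \<le> dist s p + dist p t" using tri[OF sV Suc.prems tV] .
      ultimately show ?thesis using dist_sym[of s p] by simp
    next
      case False
      then have "dist p s = dist p' s + 1" "dist p t = dist p' t + 1" using cs ct F1 by auto
      then show ?thesis using IH p' Suc.hyps by auto
    qed
  qed
qed

lemma greedy_geo:
  assumes rV: "r \<in> V" and lV: "l \<in> V" and xV: "x \<in> V" and vV: "v \<in> V"
    and lx: "dist l x = R" and xr: "dist x r + R = dist l r"
    and vr: "dist v r \<le> dist l r" and vl: "dist v l \<le> 2 * R"
  shows "dist v x \<le> R"
proof -
  have "dist v x + dist r l \<le> max (dist v r + dist x l) (dist v l + dist x r)"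
    using four_point[OF xV rV lV vV] .
  then show ?thesis using lx xr vr vl dist_sym[of r l] dist_sym[of x l] by auto
qed

definition ch :: "'a \<Rightarrow> 'a \<Rightarrow> 'a set" where
  "ch r v = {u \<in> V. E v u \<and> dist r u = dist r v + 1}"

lemma nbrs_root: "r \<in> V \<Longrightarrow> {u \<in> V. E r u} = ch r r"
  unfolding ch_def using adj_dist by auto

lemma nbrs_nonroot:
  assumes rV: "r \<in> V" and vV: "v \<in> V" and vr: "v \<noteq> r"
  shows "\<exists>p. p \<notin> ch r v \<and> {u \<in> V. E v u} = insert p (ch r v)"
proof -
  have "0 < dist v r" using dist_0 vV rV vr by auto
  then obtain p where p: "E v p" "dist p r = dist v r - 1" using step_dist[OF vV rV] by auto
  have pV: "p \<in> V" using p edgeV by auto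
  have pr: "dist r p + 1 = dist r v" using p \<open>0 < dist v r\<close> dist_sym[of p r] dist_sym[of v r] by simp
  have "{u \<in> V. E v u} = insert p (ch r v)"
  proof
    show "insert p (ch r v) \<subseteq> {u \<in> V. E v u}" using p pV unfolding ch_def by auto
    show "{u \<in> V. E v u} \<subseteq> insert p (ch r v)"
    proof
      fix u assume u: "u \<in> {u \<in> V. E v u}"
      then have uV: "u \<in> V" and vu: "E v u" by auto
      have "dist u r = dist v r + 1 \<or> dist v r = dist u r + 1" using adj_pm[OF vu rV] .
      then show "u \<in> insert p (ch r v)"
      proof
        assume "dist u r = dist v r + 1"
        then show ?thesis using uV vu dist_sym[of u r] dist_sym[of v r] unfolding ch_def by auto
      next
        assume a: "dist v r = dist u r + 1"
        have "u = p" using uniq_closer[OF vV rV vu p(1)] a p \<open>0 < dist v r\<close> by simp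
        then show ?thesis by simp
      qed
    qed
  qed
  moreover have "p \<notin> ch r v" using pr unfolding ch_def by auto
  ultimately show ?thesis by blast
qed

lemma deg_nonroot:
  assumes "r \<in> V" "v \<in> V" "v \<noteq> r"
  shows "degree V E v = card (ch r v) + 1"
proof -
  obtain p where "p \<notin> ch r v" "{u \<in> V. E v u} = insert p (ch r v)" using nbrs_nonroot[OF assms] by auto
  moreover have "finite (ch r v)" using finV unfolding ch_def by auto
  ultimately show ?thesis unfolding degree_def by simp
qed

lemma deg_root: "r \<in> V \<Longrightarrow> degree V E r = card (ch r r)"
  unfolding degree_def using nbrs_root by simp

lemma sum_ch:
  assumes rV: "r \<in> V"
  shows "(\<Sum>v\<in>V. card (ch r v)) = card V - 1"
proof -
  have U: "(\<Union>v\<in>V. ch r v) = V - {r}"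
  proof
    show "(\<Union>v\<in>V. ch r v) \<subseteq> V - {r}" unfolding ch_def by auto
    show "V - {r} \<subseteq> (\<Union>v\<in>V. ch r v)"
    proof
      fix u assume u: "u \<in> V - {r}"
      then have uV: "u \<in> V" and ur: "u \<noteq> r" by auto
      have "0 < dist u r" using dist_0 uV rV ur by auto
      then obtain p where p: "E u p" "dist p r = dist u r - 1" using step_dist[OF uV rV] by auto
      have "u \<in> ch r p" using p uV \<open>0 < dist u r\<close> esym dist_sym[of p r] dist_sym[of u r] unfolding ch_def by auto
      moreover have "p \<in> V" using p edgeV by auto
      ultimately show "u \<in> (\<Union>v\<in>V. ch r v)" by auto
    qed
  qed
  have D: "\<forall>i\<in>V. \<forall>j\<in>V. i \<noteq> j \<longrightarrow> ch r i \<inter> ch r j = {}"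
  proof (intro ballI impI)
    fix i j assume iV: "i \<in> V" and jV: "j \<in> V" and ij: "i \<noteq> j"
    show "ch r i \<inter> ch r j = {}"
    proof (rule ccontr)
      assume "ch r i \<inter> ch r j \<noteq> {}"
      then obtain u where "u \<in> ch r i" "u \<in> ch r j" by auto
      then have u: "u \<in> V" "E i u" "E j u" "dist r u = dist r i + 1" "dist r u = dist r j + 1"
        unfolding ch_def by auto
      have "i = j" using uniq_closer[OF u(1) rV, of i j] u esym dist_sym by fastforce
      then show False using ij by simp
    qed
  qed
  have "card (\<Union>v\<in>V. ch r v) = (\<Sum>v\<in>V. card (ch r v))"
    using card_UN_disjoint[OF finV _ D] finV unfolding ch_def by auto
  then show ?thesis using U rV finV by simp
qed

lemma card_filter_sum: "finite A \<Longrightarrow> int (card {x \<in> A. P x}) = (\<Sum>x\<in>A. if P x then 1 else 0)"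
proof -
  assume f: "finite A"
  have "int (card {x \<in> A. P x}) = (\<Sum>x\<in>{x \<in> A. P x}. 1)" by simp
  also have "\<dots> = (\<Sum>x\<in>A. if P x then 1 else 0)" by (rule sum.inter_filter[OF f])
  finally show ?thesis .
qed

lemma psi0:
  assumes two: "2 \<le> card V"
  shows "int (card V) + int (card {v \<in> V. degree V E v = 2}) \<ge> 2 + 2 * int (card {v \<in> V. 2 \<le> degree V E v})"
proof -
  obtain r where rV: "r \<in> V" using Vne by auto
  define g :: "nat \<Rightarrow> int" where "g d = 1 + (if d = 2 then 1 else 0) - 2 * (if 2 \<le> d then 1 else 0)" for d
  define c where "c v = card (ch r v)" for v
  have lhs: "int (card V) + int (card {v \<in> V. degree V E v = 2}) - 2 * int (card {v \<in> V. 2 \<le> degree V E v})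
      = (\<Sum>v\<in>V. g (degree V E v))"
    using card_filter_sum[OF finV] unfolding g_def
    by (simp add: sum.distrib sum_subtractf sum_distrib_left)
  have split: "(\<Sum>v\<in>V. g (degree V E v)) = g (c r) + (\<Sum>v\<in>V - {r}. g (c v + 1))"
  proof -
    have "(\<Sum>v\<in>V. g (degree V E v)) = g (degree V E r) + (\<Sum>v\<in>V - {r}. g (degree V E v))"
      using sum.remove[OF finV rV] by simp
    also have "(\<Sum>v\<in>V - {r}. g (degree V E v)) = (\<Sum>v\<in>V - {r}. g (c v + 1))"
      using deg_nonroot[OF rV] unfolding c_def by (intro sum.cong) auto
    finally show ?thesis using deg_root[OF rV] unfolding c_def by simp
  qed
  have ge: "(\<Sum>v\<in>V - {r}. g (c v + 1)) \<ge> (\<Sum>v\<in>V - {r}. 1 - int (c v))"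
    by (intro sum_mono) (auto simp: g_def)
  have s1: "(\<Sum>v\<in>V - {r}. 1 - int (c v)) = int (card V - 1) - ((\<Sum>v\<in>V. int (c v)) - int (c r))"
    using sum.remove[OF finV rV, of "\<lambda>v. int (c v)"] finV rV
    by (simp add: sum_subtractf)
  have s2: "(\<Sum>v\<in>V. int (c v)) = int (card V - 1)"
    using sum_ch[OF rV] unfolding c_def by (simp flip: of_nat_sum)
  have cr: "1 \<le> c r"
  proof -
    obtain u where uV: "u \<in> V" and ur: "u \<noteq> r"
      using two rV by (metis card_le_Suc0_iff_eq finV not_less_eq_eq numeral_2_eq_2)
    have "0 < dist r u" using dist_0 uV rV ur by auto
    then obtain y where y: "E r y" using step_dist[OF rV uV] by auto
    then have "y \<in> ch r r" using nbrs_root[OF rV] edgeV by auto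
    moreover have "finite (ch r r)" using finV unfolding ch_def by auto
    ultimately show ?thesis unfolding c_def using card_0_eq by fastforce
  qed
  have "g (c r) + int (c r) \<ge> 2" using cr unfolding g_def by auto
  then have "(\<Sum>v\<in>V. g (degree V E v)) \<ge> 2" using split ge s1 s2 by linarith
  then show ?thesis using lhs by linarith
qed

end


context tr
begin

definition holes :: "nat \<Rightarrow> 'a set \<Rightarrow> 'a set" where
  "holes K L = {v \<in> V. 2 \<le> degree V E v \<and> (\<forall>l\<in>L. K \<le> dist l v)}"

definition cfg :: "'a list \<Rightarrow> bool" where
  "cfg ls \<longleftrightarrow> set ls \<subseteq> V \<and>
     (\<forall>i j. i < j \<longrightarrow> j < length ls \<longrightarrow> 2 * (length ls - 2 - i) + 1 \<le> dist (ls!i) (ls!j))"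

lemma interior_deg:
  assumes aV: "a \<in> V" and bV: "b \<in> V" and yV: "y \<in> V"
    and ay: "dist a y = s" and yb: "dist y b = dist a b - s" and s0: "0 < s" and sD: "s < dist a b"
  shows "2 \<le> degree V E y"
proof -
  have "0 < dist y a" using ay s0 dist_sym by simp
  then obtain z1 where z1: "E y z1" "dist z1 a = dist y a - 1" using step_dist[OF yV aV] by auto
  have "0 < dist y b" using yb sD by simp
  then obtain z2 where z2: "E y z2" "dist z2 b = dist y b - 1" using step_dist[OF yV bV] by auto
  have z1V: "z1 \<in> V" and z2V: "z2 \<in> V" using z1 z2 edgeV by auto
  have "dist a b \<le> dist a z2 + dist z2 b" using tri[OF aV z2V bV] .
  then have "s + 1 \<le> dist a z2" using z2 yb sD by simp
  moreover have "dist a z1 = s - 1" using z1 ay dist_sym[of z1 a] dist_sym[of y a] by simp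
  ultimately have "z1 \<noteq> z2" using s0 by auto
  then have "card {z1, z2} = 2" by simp
  moreover have "{z1, z2} \<subseteq> {u \<in> V. E y u}" using z1 z2 z1V z2V by auto
  moreover have "finite {u \<in> V. E y u}" using finV by auto
  ultimately have "card {z1, z2} \<le> card {u \<in> V. E y u}" by (intro card_mono)
  then show ?thesis unfolding degree_def using \<open>card {z1, z2} = 2\<close> by simp
qed

lemma cfg_tl: "cfg (a # ls) \<Longrightarrow> cfg ls"
  unfolding cfg_def
proof (intro conjI allI impI)
  assume h: "set (a # ls) \<subseteq> V \<and> (\<forall>i j. i < j \<longrightarrow> j < length (a # ls) \<longrightarrow>
              2 * (length (a # ls) - 2 - i) + 1 \<le> dist ((a # ls) ! i) ((a # ls) ! j))"
  then show "set ls \<subseteq> V" by auto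
  fix i j assume ij: "i < j" "j < length ls"
  then have "Suc i < Suc j" "Suc j < length (a#ls)" by auto
  from h[THEN conjunct2, rule_format, OF this]
  show "2 * (length ls - 2 - i) + 1 \<le> dist (ls ! i) (ls ! j)" by simp
qed

lemma cfg_hd: "cfg (a # ls) \<Longrightarrow> l \<in> set ls \<Longrightarrow> 2 * (length ls - 1) + 1 \<le> dist a l"
proof -
  assume c: "cfg (a # ls)" and l: "l \<in> set ls"
  then obtain j where j: "j < length ls" "ls ! j = l" by (auto simp: in_set_conv_nth)
  have "0 < Suc j" "Suc j < length (a # ls)" using j by auto
  then have "2 * (length (a # ls) - 2 - 0) + 1 \<le> dist ((a # ls) ! 0) ((a # ls) ! Suc j)"
    using c unfolding cfg_def by blast
  then show ?thesis using j by simp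
qed

lemma packing:
  "1 \<le> K \<Longrightarrow> length ls = K + 1 \<Longrightarrow> cfg ls \<Longrightarrow>
     int (card V) + int (card {v \<in> V. degree V E v = 2}) \<ge> int (K * K + K) + 2 * int (card (holes K (set ls)))"
proof (induction K arbitrary: ls)
  case 0 then show ?case by simp
next
  case (Suc K)
  show ?case
  proof (cases "K = 0")
    case True
    then have l2: "length ls = 2" using Suc.prems(2) by simp
    then obtain a b where ls: "ls = [a, b]"
      by (cases ls; cases "tl ls") auto
    have "(0::nat) < 1" "1 < length ls" using l2 by auto
    from Suc.prems(3)[unfolded cfg_def, THEN conjunct2, rule_format, OF this]
    have "2 * (length ls - 2 - 0) + 1 \<le> dist (ls!0) (ls!1)" .
    then have "1 \<le> dist a b" using ls by simp
    then have ab: "a \<noteq> b" by auto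
    have abV: "a \<in> V" "b \<in> V" using Suc.prems(3) ls unfolding cfg_def by auto
    have "card {a, b} \<le> card V" using abV finV by (intro card_mono) auto
    then have two: "2 \<le> card V" using ab by simp
    have "holes (Suc K) (set ls) \<subseteq> {v \<in> V. 2 \<le> degree V E v}" unfolding holes_def by auto
    then have "card (holes (Suc K) (set ls)) \<le> card {v \<in> V. 2 \<le> degree V E v}"
      using finV by (intro card_mono) auto
    then show ?thesis using psi0[OF two] True by simp
  next
    case False
    then have K1: "1 \<le> K" by simp
    obtain a ls' where ls: "ls = a # ls'" using Suc.prems(2) by (cases ls) auto
    have len': "length ls' = K + 1" using Suc.prems(2) ls by simp
    have cfg': "cfg ls'" using cfg_tl Suc.prems(3) ls by simp
    have IH: "int (card V) + int (card {v \<in> V. degree V E v = 2}) \<ge> int (K * K + K) + 2 * int (card (holes K (set ls')))"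
      using Suc.IH[OF K1 len' cfg'] .
    have aV: "a \<in> V" using Suc.prems(3) ls unfolding cfg_def by auto
    have ls'V: "set ls' \<subseteq> V" using cfg' unfolding cfg_def by auto
    have far: "2 * K + 1 \<le> dist a l" if "l \<in> set ls'" for l
      using cfg_hd[of a ls' l] Suc.prems(3) ls len' that by simp
    have ne: "set ls' \<noteq> {}" using len' by auto
    define D0 where "D0 = Min (dist a ` set ls')"
    have "D0 \<in> dist a ` set ls'" unfolding D0_def using ne by (intro Min_in) auto
    then obtain b where b: "b \<in> set ls'" "dist a b = D0" by auto
    have bmin: "\<And>l. l \<in> set ls' \<Longrightarrow> D0 \<le> dist a l" unfolding D0_def by simp
    have bV: "b \<in> V" using b ls'V by auto
    have D0K: "2 * K + 1 \<le> D0" using far b by auto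
    have "\<forall>s. \<exists>y. s \<le> D0 \<longrightarrow> y \<in> V \<and> dist a y = s \<and> dist y b = D0 - s"
      using split_dist[OF aV bV] b by auto
    then have "\<exists>f. \<forall>s. s \<le> D0 \<longrightarrow> f s \<in> V \<and> dist a (f s) = s \<and> dist (f s) b = D0 - s"
      by (rule choice)
    then obtain f where f: "\<And>s. s \<le> D0 \<Longrightarrow> f s \<in> V \<and> dist a (f s) = s \<and> dist (f s) b = D0 - s"
      by blast
    define I where "I = {1..K} \<union> {D0 - K}"
    have Iprop: "\<And>s. s \<in> I \<Longrightarrow> 0 < s \<and> s < D0" unfolding I_def using D0K K1 by auto
    have injf: "inj_on f I"
    proof (rule inj_onI)
      fix s t
      assume st: "s \<in> I" "t \<in> I" "f s = f t"
      have "dist a (f s) = s" using f[of s] Iprop[OF st(1)] by auto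
      moreover have "dist a (f t) = t" using f[of t] Iprop[OF st(2)] by auto
      ultimately show "s = t" using st(3) by metis
    qed
    have cardI: "card I = Suc K"
    proof -
      have "\<not> (D0 - K \<le> K)" using D0K by linarith
      then have "D0 - K \<notin> {1..K}" by simp
      then show ?thesis unfolding I_def by simp
    qed
    define N where "N = f ` I"
    have cardN: "card N = Suc K" unfolding N_def using card_image[OF injf] cardI by simp
    have Nsub: "N \<subseteq> holes K (set ls')"
    proof
      fix y assume "y \<in> N"
      then obtain s where s: "s \<in> I" "y = f s" unfolding N_def by auto
      have sD: "0 < s" "s < D0" using Iprop s by auto
      have fy: "y \<in> V" "dist a y = s" "dist y b = D0 - s" using f[of s] sD s by auto
      have deg: "2 \<le> degree V E y" using interior_deg[OF aV bV fy(1) fy(2)] fy sD b by simp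
      have "\<forall>l\<in>set ls'. K \<le> dist l y"
      proof
        fix l assume l: "l \<in> set ls'"
        have lV: "l \<in> V" using l ls'V by auto
        have t: "dist a l \<le> dist a y + dist y l" using tri[OF aV fy(1) lV] .
        show "K \<le> dist l y"
        proof (cases "s \<le> K")
          case True then show ?thesis using t far[OF l] fy dist_sym[of y l] by simp
        next
          case False
          then have "s = D0 - K" using s(1) unfolding I_def by auto
          then show ?thesis using t bmin[OF l] fy dist_sym[of y l] D0K by simp
        qed
      qed
      then show "y \<in> holes K (set ls')" unfolding holes_def using fy deg by auto
    qed
    have Ndisj: "N \<inter> holes (Suc K) (set ls) = {}"
    proof (rule ccontr)
      assume "N \<inter> holes (Suc K) (set ls) \<noteq> {}"
      then obtain y where y: "y \<in> N" "y \<in> holes (Suc K) (set ls)" by auto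
      then obtain s where s: "s \<in> I" "y = f s" unfolding N_def by auto
      have sD: "0 < s" "s < D0" using Iprop s by auto
      have fy: "y \<in> V" "dist a y = s" "dist y b = D0 - s" using f[of s] sD s by auto
      have hy: "\<forall>l\<in>set ls. Suc K \<le> dist l y" using y(2) unfolding holes_def by auto
      show False
      proof (cases "s \<le> K")
        case True
        then show False using hy fy ls by auto
      next
        case False
        then have "s = D0 - K" using s(1) unfolding I_def by auto
        then have "dist b y = K" using fy D0K dist_sym[of y b] by simp
        moreover have "Suc K \<le> dist b y" using hy b(1) ls by simp
        ultimately show False by simp
      qed
    qed
    have hsub: "holes (Suc K) (set ls) \<subseteq> holes K (set ls')"
      unfolding holes_def ls by auto
    have finH: "finite (holes K (set ls'))" using finV unfolding holes_def by auto
    have "card (holes (Suc K) (set ls) \<union> N) \<le> card (holes K (set ls'))"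
      using hsub Nsub finH by (intro card_mono) auto
    moreover have "card (holes (Suc K) (set ls) \<union> N) = card (holes (Suc K) (set ls)) + card N"
    proof (rule card_Un_disjoint)
      show "finite (holes (Suc K) (set ls))" using finite_subset[OF hsub finH] .
      show "finite N" using finite_subset[OF Nsub finH] .
      show "holes (Suc K) (set ls) \<inter> N = {}" using Ndisj by blast
    qed
    ultimately have "card (holes (Suc K) (set ls)) + Suc K \<le> card (holes K (set ls'))" using cardN by simp
    then show ?thesis using IH by (simp add: algebra_simps)
  qed
qed

end


context tr
begin

lemma center:
  assumes rV: "r \<in> V" and UV: "U \<subseteq> V" and Une: "U \<noteq> {}"
  shows "\<exists>l\<in>U. \<exists>x\<in>V. \<forall>u\<in>U. dist u l \<le> 2 * R \<longrightarrow> dist x u \<le> R"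
proof -
  have finU: "finite U" using finite_subset[OF UV finV] .
  define D where "D = Max ((\<lambda>u. dist u r) ` U)"
  have "D \<in> (\<lambda>u. dist u r) ` U" unfolding D_def using finU Une by (intro Max_in) auto
  then obtain l where l: "l \<in> U" "dist l r = D" by auto
  have lmax: "\<And>u. u \<in> U \<Longrightarrow> dist u r \<le> D" unfolding D_def using finU by simp
  have lV: "l \<in> V" using l UV by auto
  show ?thesis
  proof (cases "D \<le> R")
    case True
    have "\<forall>u\<in>U. dist u l \<le> 2 * R \<longrightarrow> dist r u \<le> R"
      using lmax True dist_sym by fastforce
    then show ?thesis using l rV by blast
  next
    case False
    obtain x where xV: "x \<in> V" and x: "dist l x = R" "dist x r = dist l r - R"
      using split_dist[OF lV rV, of R] False l by auto
    have "\<forall>u\<in>U. dist u l \<le> 2 * R \<longrightarrow> dist x u \<le> R"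
    proof (intro ballI impI)
      fix u assume u: "u \<in> U" "dist u l \<le> 2 * R"
      have uV: "u \<in> V" using u UV by auto
      have "dist u x \<le> R"
        using greedy_geo[OF rV lV xV uV x(1)] x False l lmax[OF u(1)] u(2) by simp
      then show "dist x u \<le> R" using dist_sym by simp
    qed
    then show ?thesis using l xV by blast
  qed
qed

lemma cfg_cons:
  assumes c: "cfg ls" and lV: "l \<in> V" and far: "\<forall>y\<in>set ls. 2 * (length ls - 1) + 1 \<le> dist l y"
  shows "cfg (l # ls)"
  unfolding cfg_def
proof (intro conjI allI impI)
  show "set (l # ls) \<subseteq> V" using c lV unfolding cfg_def by auto
  fix i j assume ij: "i < j" "j < length (l # ls)"
  then obtain j' where j': "j = Suc j'" by (cases j) auto
  show "2 * (length (l # ls) - 2 - i) + 1 \<le> dist ((l # ls) ! i) ((l # ls) ! j)"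
  proof (cases i)
    case 0
    have "ls ! j' \<in> set ls" using ij j' by simp
    then show ?thesis using far 0 j' by simp
  next
    case (Suc i')
    have "i' < j'" "j' < length ls" using ij j' Suc by auto
    from c[unfolded cfg_def, THEN conjunct2, rule_format, OF this]
    show ?thesis using Suc j' by simp
  qed
qed

lemma greedy:
  assumes rV: "r \<in> V"
  shows "U \<subseteq> V \<Longrightarrow> (\<exists>cs. length cs = R + 1 \<and> set cs \<subseteq> V \<and> (\<forall>u\<in>U. \<exists>i<R+1. dist (cs!i) u \<le> R - i))
     \<or> (\<exists>ls. length ls = R + 2 \<and> set ls \<subseteq> U \<and> cfg ls)"
proof (induction R arbitrary: U)
  case 0
  show ?case
  proof (cases "U = {}")
    case True
    then show ?thesis using rV by (intro disjI1 exI[of _ "[r]"]) auto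
  next
    case False
    obtain l x where l: "l \<in> U" and xV: "x \<in> V" and lx: "\<forall>u\<in>U. dist u l \<le> 2 * 0 \<longrightarrow> dist x u \<le> 0"
      using center[OF rV 0 False, of 0] by blast
    show ?thesis
    proof (cases "\<forall>u\<in>U. dist x u \<le> 0")
      case True
      then show ?thesis using xV by (intro disjI1 exI[of _ "[x]"]) auto
    next
      case False
      then obtain u where u: "u \<in> U" "0 < dist x u" by auto
      then have "0 < dist u l" using lx by auto
      moreover have "set [l, u] \<subseteq> U" using u l by auto
      moreover have "cfg [l, u]"
      proof -
        have "[l] \<noteq> []" by simp
        have c1: "cfg [u]" using u 0 unfolding cfg_def by auto
        show ?thesis using cfg_cons[OF c1] l 0 \<open>0 < dist u l\<close> dist_sym[of u l] by auto
      qed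
      ultimately show ?thesis by (intro disjI2 exI[of _ "[l, u]"]) auto
    qed
  qed
next
  case (Suc R)
  show ?case
  proof (cases "U = {}")
    case True
    then show ?thesis using rV by (intro disjI1 exI[of _ "replicate (Suc R + 1) r"]) auto
  next
    case False
    obtain l x where l: "l \<in> U" and xV: "x \<in> V" and lx: "\<forall>u\<in>U. dist u l \<le> 2 * Suc R \<longrightarrow> dist x u \<le> Suc R"
      using center[OF rV Suc.prems False, of "Suc R"] by blast
    define U' where "U' = {u \<in> U. Suc R < dist x u}"
    have U'U: "U' \<subseteq> U" unfolding U'_def by auto
    have U'V: "U' \<subseteq> V" using U'U Suc.prems by auto
    have far: "\<And>u. u \<in> U' \<Longrightarrow> 2 * Suc R + 1 \<le> dist l u"
    proof -
      fix u assume "u \<in> U'"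
      then have "u \<in> U" "Suc R < dist x u" unfolding U'_def by auto
      then have "\<not> dist u l \<le> 2 * Suc R" using lx by auto
      then show "2 * Suc R + 1 \<le> dist l u" using dist_sym[of u l] by simp
    qed
    from Suc.IH[OF U'V] show ?thesis
    proof
      assume "\<exists>cs. length cs = R + 1 \<and> set cs \<subseteq> V \<and> (\<forall>u\<in>U'. \<exists>i<R + 1. dist (cs ! i) u \<le> R - i)"
      then obtain cs where cs: "length cs = R + 1" "set cs \<subseteq> V" "\<forall>u\<in>U'. \<exists>i<R + 1. dist (cs ! i) u \<le> R - i"
        by blast
      have "\<forall>u\<in>U. \<exists>i<Suc R + 1. dist ((x # cs) ! i) u \<le> Suc R - i"
      proof
        fix u assume u: "u \<in> U"
        show "\<exists>i<Suc R + 1. dist ((x # cs) ! i) u \<le> Suc R - i"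
        proof (cases "dist x u \<le> Suc R")
          case True
          then show ?thesis by (intro exI[of _ 0]) auto
        next
          case False
          then have "u \<in> U'" unfolding U'_def using u by auto
          then obtain i where i: "i < R + 1" "dist (cs ! i) u \<le> R - i" using cs(3) by blast
          then show ?thesis by (intro exI[of _ "Suc i"]) auto
        qed
      qed
      then show ?thesis using cs xV by (intro disjI1 exI[of _ "x # cs"]) auto
    next
      assume "\<exists>ls. length ls = R + 2 \<and> set ls \<subseteq> U' \<and> cfg ls"
      then obtain ls where ls: "length ls = R + 2" "set ls \<subseteq> U'" "cfg ls" by blast
      have lV: "l \<in> V" using l Suc.prems by auto
      have "\<forall>y\<in>set ls. 2 * (length ls - 1) + 1 \<le> dist l y" using far ls by auto
      then have "cfg (l # ls)" using cfg_cons[OF ls(3) lV] by simp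
      moreover have "set (l # ls) \<subseteq> U" using ls U'U l by auto
      ultimately show ?thesis using ls by (intro disjI2 exI[of _ "l # ls"]) auto
    qed
  qed
qed

end


lemma burned_prefix: "t \<le> length ps \<Longrightarrow> burned E (ps @ qs) t = burned E ps t"
  by (induction t) (auto simp: nth_append)

lemma burned_mono: "t \<le> t' \<Longrightarrow> burned E xs t \<subseteq> burned E xs t'"
proof (induction t' )
  case 0 then show ?case by simp
next
  case (Suc t') then show ?case by (cases "t = Suc t'") auto
qed

lemma burned_spread: "v \<in> burned E xs t \<Longrightarrow> E v u \<Longrightarrow> u \<in> burned E xs (Suc t)"
  by auto

lemma burned_walk: "c \<in> burned E xs s \<Longrightarrow> (E ^^ n) c v \<Longrightarrow> v \<in> burned E xs (s + n)"
proof (induction n arbitrary: v)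
  case 0 then show ?case by simp
next
  case (Suc n)
  from Suc.prems(2) obtain y where "(E ^^ n) c y" "E y v" by (auto elim: relpowp_Suc_E)
  then show ?case using Suc.IH[OF Suc.prems(1)] by auto
qed

context tr
begin

lemma burned_sub: "(\<forall>r<t. xs ! r \<in> V) \<Longrightarrow> burned E xs t \<subseteq> V"
  by (induction t) (auto dest: edgeV)

definition nxt :: "'a list \<Rightarrow> 'a list \<Rightarrow> 'a" where
  "nxt cs ps = (if length ps < length cs \<and> cs ! length ps \<notin> burned E ps (length ps) then cs ! length ps
                else (SOME v. v \<in> V \<and> v \<notin> burned E ps (length ps)))"

fun bseq :: "'a list \<Rightarrow> nat \<Rightarrow> 'a list" where
  "bseq cs 0 = []"
| "bseq cs (Suc m) = (if burned E (bseq cs m) (length (bseq cs m)) = V then bseq cs m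
                      else bseq cs m @ [nxt cs (bseq cs m)])"

lemma bseq_inv:
  assumes csV: "set cs \<subseteq> V"
  shows "length (bseq cs m) \<le> m
    \<and> (\<forall>t<length (bseq cs m). bseq cs m ! t \<in> V \<and> bseq cs m ! t \<notin> burned E (bseq cs m) t
          \<and> burned E (bseq cs m) t \<noteq> V)
    \<and> (length (bseq cs m) < m \<longrightarrow> burned E (bseq cs m) (length (bseq cs m)) = V)
    \<and> (\<forall>i<length (bseq cs m). i < length cs \<longrightarrow> cs ! i \<in> burned E (bseq cs m) (Suc i))"
proof (induction m)
  case 0 then show ?case by simp
next
  case (Suc m)
  define ps where "ps = bseq cs m"
  note IH = Suc.IH[folded ps_def]
  show ?case
  proof (cases "burned E ps (length ps) = V")
    case True
    then have eq: "bseq cs (Suc m) = ps" unfolding ps_def by simp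
    show ?thesis unfolding eq using IH True by auto
  next
    case False
    define B where "B = burned E ps (length ps)"
    define c where "c = nxt cs ps"
    have eq: "bseq cs (Suc m) = ps @ [c]" using False unfolding ps_def c_def by simp
    have BV: "B \<subseteq> V" unfolding B_def using burned_sub IH by auto
    have cprop: "c \<in> V \<and> c \<notin> B"
    proof (cases "length ps < length cs \<and> cs ! length ps \<notin> B")
      case True
      then show ?thesis using csV unfolding c_def nxt_def B_def by auto
    next
      case F: False
      have "\<exists>v. v \<in> V \<and> v \<notin> B" using BV False unfolding B_def by auto
      then have "(SOME v. v \<in> V \<and> v \<notin> B) \<in> V \<and> (SOME v. v \<in> V \<and> v \<notin> B) \<notin> B"
        by (rule someI_ex)
      then show ?thesis using F unfolding c_def nxt_def B_def by auto
    qed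
    have pre: "\<And>t. t \<le> length ps \<Longrightarrow> burned E (ps @ [c]) t = burned E ps t"
      by (rule burned_prefix)
    have A: "length (ps @ [c]) \<le> Suc m" using IH by simp
    have Bb: "\<forall>t<length (ps @ [c]). (ps @ [c]) ! t \<in> V \<and> (ps @ [c]) ! t \<notin> burned E (ps @ [c]) t
          \<and> burned E (ps @ [c]) t \<noteq> V"
    proof (intro allI impI)
      fix t assume t: "t < length (ps @ [c])"
      show "(ps @ [c]) ! t \<in> V \<and> (ps @ [c]) ! t \<notin> burned E (ps @ [c]) t \<and> burned E (ps @ [c]) t \<noteq> V"
      proof (cases "t < length ps")
        case True
        then show ?thesis using IH pre[of t] by (auto simp: nth_append)
      next
        case False
        then have "t = length ps" using t by simp
        then show ?thesis using pre[of t] cprop False unfolding B_def[symmetric]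
          by (auto simp: nth_append B_def)
      qed
    qed
    have C: "length (ps @ [c]) < Suc m \<longrightarrow> burned E (ps @ [c]) (length (ps @ [c])) = V"
      using IH False by auto
    have D: "\<forall>i<length (ps @ [c]). i < length cs \<longrightarrow> cs ! i \<in> burned E (ps @ [c]) (Suc i)"
    proof (intro allI impI)
      fix i assume i: "i < length (ps @ [c])" "i < length cs"
      show "cs ! i \<in> burned E (ps @ [c]) (Suc i)"
      proof (cases "i < length ps")
        case True
        then show ?thesis using IH pre[of "Suc i"] i by auto
      next
        case False
        then have il: "i = length ps" using i by simp
        show ?thesis
        proof (cases "cs ! i \<in> B")
          case True
          then have "cs ! i \<in> burned E (ps @ [c]) i" using pre[of i] il unfolding B_def by simp
          then show ?thesis by simp
        next
          case F2: False
          then have "c = cs ! i" using il i unfolding c_def nxt_def B_def by simp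
          then show ?thesis using il by (simp add: nth_append)
        qed
      qed
    qed
    show ?thesis unfolding eq using A Bb C D by blast
  qed
qed

lemma cover_burn:
  assumes csV: "set cs \<subseteq> V" and len: "length cs = k"
    and cov: "\<forall>v\<in>V. \<exists>i<k. dist (cs ! i) v \<le> k - 1 - i"
  shows "burning_number V E \<le> k"
proof -
  define bs where "bs = bseq cs k"
  have I: "length bs \<le> k"
    "\<forall>t<length bs. bs ! t \<in> V \<and> bs ! t \<notin> burned E bs t \<and> burned E bs t \<noteq> V"
    "length bs < k \<longrightarrow> burned E bs (length bs) = V"
    "\<forall>i<length bs. i < length cs \<longrightarrow> cs ! i \<in> burned E bs (Suc i)"
    using bseq_inv[OF csV, of k] unfolding bs_def by blast+
  have "\<forall>r<length bs. bs ! r \<in> V" using I(2) by blast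
  then have bsV: "burned E bs (length bs) \<subseteq> V" by (rule burned_sub)
  have full: "burned E bs (length bs) = V"
  proof (cases "length bs < k")
    case True then show ?thesis using I(3) by blast
  next
    case False
    then have lk: "length bs = k" using I(1) by simp
    have "V \<subseteq> burned E bs k"
    proof
      fix v assume vV: "v \<in> V"
      then obtain i where i: "i < k" "dist (cs ! i) v \<le> k - 1 - i" using cov by blast
      have ciV: "cs ! i \<in> V" using csV i len by auto
      have cb: "cs ! i \<in> burned E bs (Suc i)" using I(4) i lk len by simp
      have "v \<in> burned E bs (Suc i + dist (cs ! i) v)" using burned_walk[OF cb dist_ex[OF ciV vV]] .
      moreover have "Suc i + dist (cs ! i) v \<le> k" using i by simp
      ultimately show "v \<in> burned E bs k" using burned_mono[of "Suc i + dist (cs ! i) v" k E bs] by blast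
    qed
    then show ?thesis using bsV lk by blast
  qed
  have "burning_sequence V E bs" unfolding burning_sequence_def
  proof (intro conjI)
    show "\<forall>r<length bs. bs ! r \<in> V \<and> bs ! r \<notin> burned E bs r" using I(2) by blast
    show "burned E bs (length bs) = V" by (rule full)
    show "\<forall>r<length bs. burned E bs r \<noteq> V" using I(2) by blast
  qed
  then have "burning_number V E \<le> length bs" unfolding burning_number_def by (intro Least_le) blast
  then show ?thesis using I(1) by simp
qed

end

lemma arith_bound:
  fixes m :: nat
  assumes m1: "1 \<le> m"
  defines "c \<equiv> \<lceil>sqrt (real m + 0.25) - 1.5\<rceil>"
  defines "k \<equiv> \<lceil>sqrt (real m - of_int c)\<rceil>"
  shows "1 \<le> k \<and> int m \<le> k * k + k - 1"
proof -
  have c1: "sqrt (real m + 0.25) - 1.5 \<le> of_int c" unfolding c_def by (rule le_of_int_ceiling)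
  have c2: "of_int c < sqrt (real m + 0.25) - 1.5 + 1" unfolding c_def
    using ceiling_correct[of "sqrt (real m + 0.25) - 1.5"] by linarith
  have "sqrt 1 < sqrt (real m + 0.25)" using m1 by (subst real_sqrt_less_iff) simp
  then have "1 < sqrt (real m + 0.25)" by simp
  then have c0: "0 \<le> c" using c1 by linarith
  have "sqrt (real m + 0.25) \<le> of_int c + 1.5" using c1 by simp
  then have "real m + 0.25 \<le> (of_int c + 1.5)^2" using c0 by (intro sqrt_le_D) 
  then have up: "real m \<le> (of_int c)^2 + 3 * of_int c + 2" by (simp add: power2_eq_square algebra_simps)
  have "of_int c + 0.5 < sqrt (real m + 0.25)" using c2 by simp
  moreover have "0 \<le> of_int c + (0.5::real)" using c0 by simp
  ultimately have "(of_int c + 0.5)^2 < real m + 0.25"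
    by (metis real_less_rsqrt real_sqrt_abs real_sqrt_less_iff abs_of_nonneg power2_eq_square)
  then have low: "(of_int c)^2 + of_int c < real m" by (simp add: power2_eq_square algebra_simps)
  then have lowi: "c * c + c + 1 \<le> int m"
  proof -
    have "real_of_int (c * c + c) < real m" using low by (simp add: power2_eq_square)
    then have "c * c + c < int m" by linarith
    then show ?thesis by simp
  qed
  have pos: "real m - of_int c \<ge> (of_int c)^2 + 1"
  proof -
    have "real_of_int (c * c + c + 1) \<le> real m" using lowi by linarith
    then show ?thesis by (simp add: power2_eq_square algebra_simps)
  qed
  have k1: "sqrt (real m - of_int c) \<le> of_int k" unfolding k_def by (rule le_of_int_ceiling)
  have "sqrt ((of_int c)^2) < sqrt (real m - of_int c)" using pos by (subst real_sqrt_less_iff) simp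
  then have "of_int c < sqrt (real m - of_int c)" using c0 by simp
  then have kc: "c + 1 \<le> k" using k1 by linarith
  have "real m - of_int c \<le> (of_int k)^2" using k1 c0 kc by (intro sqrt_le_D) 
  then have "real m \<le> of_int (k * k + c)" by (simp add: power2_eq_square)
  then have "int m \<le> k * k + c" by linarith
  then show ?thesis using kc c0 by linarith
qed



theorem theorem3:
  fixes V :: "'a set" and E :: "'a \<Rightarrow> 'a \<Rightarrow> bool" and n n2 :: nat
  assumes "tree V E"
    and "n = card V"
    and "n2 = card {v \<in> V. degree V E v = 2}"
  shows "real (burning_number V E)
         \<le> of_int \<lceil>sqrt (real (n + n2) - of_int \<lceil>sqrt (real (n + n2) + 0.25) - 1.5\<rceil>)\<rceil>"
proof -
  interpret tr V E using assms(1) by unfold_locales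
  define m where "m = n + n2"
  have "card V \<noteq> 0" using finV Vne by simp
  then have m1: "1 \<le> m" unfolding m_def using assms(2) by simp
  define c where "c = \<lceil>sqrt (real m + 0.25) - 1.5\<rceil>"
  define k where "k = \<lceil>sqrt (real m - of_int c)\<rceil>"
  have ak: "1 \<le> k \<and> int m \<le> k * k + k - 1" using arith_bound[OF m1] unfolding c_def k_def by simp
  define K where "K = nat k"
  have kK: "k = int K" unfolding K_def using ak by simp
  have K1: "1 \<le> K" using ak kK by simp
  have "int m \<le> int K * int K + int K - 1" using ak kK by simp
  then have "int (m + 1) \<le> int (K * K + K)" by simp
  then have mK: "m + 1 \<le> K * K + K" by (simp only: of_nat_le_iff)
  obtain r where rV: "r \<in> V" using Vne by auto
  have "burning_number V E \<le> K"
  proof -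
    from greedy[OF rV order_refl, of "K - 1"]
    show ?thesis
    proof
      assume "\<exists>cs. length cs = K - 1 + 1 \<and> set cs \<subseteq> V \<and> (\<forall>u\<in>V. \<exists>i<K - 1 + 1. dist (cs ! i) u \<le> K - 1 - i)"
      then obtain cs where cs: "length cs = K" "set cs \<subseteq> V" "\<forall>u\<in>V. \<exists>i<K. dist (cs ! i) u \<le> K - 1 - i"
        using K1 by auto
      show ?thesis using cover_burn[OF cs(2) cs(1) cs(3)] .
    next
      assume "\<exists>ls. length ls = K - 1 + 2 \<and> set ls \<subseteq> V \<and> cfg ls"
      then obtain ls where ls: "length ls = K + 1" "cfg ls" using K1 by auto
      have "int (card V) + int (card {v \<in> V. degree V E v = 2}) \<ge> int (K * K + K) + 2 * int (card (holes K (set ls)))"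
        using packing[OF K1 ls] .
      then have "K * K + K \<le> m" unfolding m_def assms(2,3) by linarith
      then show ?thesis using mK by simp
    qed
  qed
  then have "real (burning_number V E) \<le> real K" by simp
  also have "real K = of_int k" using kK by simp
  finally show ?thesis unfolding k_def c_def m_def .
qed


end
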